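(* If $U$ is a $d$-dimensional subspace of $W$, then $$\#\{T\in L(W,V):\mathfrak{I}(T)=U\}=q^{d^2}\prod_{i=d+1}^{k}(q^n-q^i).$$
   Context: Let $\mathbb{F}_q$ be the finite field with $q$ elements, $n\ge k$ positive integers, $V$ an $n$-dimensional $\mathbb{F}_q$-vector space and $W\subseteq V$ a $k$-dimensional subspace. $L(W,V)$ is the space of $\mathbb{F}_q$-linear maps $W\to V$. For $T\in L(W,V)$, $\mathfrak{I}(T)$ denotes the maximal $T$-invariant subspace contained in $W$, i.e. the largest subspace $U\subseteq W$ with $T(U)\subseteq U$. Empty products equal $1$. *)

theory Defs
  imports Complex_Main
begin

text \<open>A linear map on W is represented canonically
  by the function that agrees with it on W and is 0 outside W.\<close>
definition lin_maps :: "('a::field \<Rightarrow> 'v::ab_group_add \<Rightarrow> 'v) \<Rightarrow> 'v set \<Rightarrow> ('v \<Rightarrow> 'v) set" where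
  "lin_maps scale W =
     {T. (\<forall>x\<in>W. \<forall>y\<in>W. T (x + y) = T x + T y)
       \<and> (\<forall>c. \<forall>x\<in>W. T (scale c x) = scale c (T x))
       \<and> (\<forall>x. x \<notin> W \<longrightarrow> T x = 0)}"

definition max_inv_sub :: "('a::field \<Rightarrow> 'v::ab_group_add \<Rightarrow> 'v) \<Rightarrow> 'v set \<Rightarrow> ('v \<Rightarrow> 'v) \<Rightarrow> 'v set" where
  "max_inv_sub scale W T =
     (THE U. module.subspace scale U \<and> U \<subseteq> W \<and> T ` U \<subseteq> U
        \<and> (\<forall>U'. module.subspace scale U' \<and> U' \<subseteq> W \<and> T ` U' \<subseteq> U' \<longrightarrow> U' \<subseteq> U))"

end

theory Submission
  imports Defs "HOL-Library.FuncSet"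
begin

definition FF :: "nat \<Rightarrow> nat \<Rightarrow> nat \<Rightarrow> nat \<Rightarrow> nat" where
  "FF q n k d = q ^ (d ^ 2) * (\<Prod>i\<in>{d+1..k}. q ^ n - q ^ i)"

lemma FF_int:
  assumes "k \<le> n" "1 \<le> q"
  shows "int (FF q n k d) = int q ^ (d ^ 2) * (\<Prod>i\<in>{d+1..k}. int q ^ n - int q ^ i)"
proof -
  have "int (\<Prod>i\<in>{d+1..k}. q ^ n - q ^ i) = (\<Prod>i\<in>{d+1..k}. int (q ^ n - q ^ i))"
    by (rule of_nat_prod)
  also have "\<dots> = (\<Prod>i\<in>{d+1..k}. int q ^ n - int q ^ i)"
  proof (rule prod.cong[OF refl])
    fix i assume "i \<in> {d+1..k}"
    then have "i \<le> n" using assms by simp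
    then have "q ^ i \<le> q ^ n" using assms(2) by (simp add: power_increasing)
    then show "int (q ^ n - q ^ i) = int q ^ n - int q ^ i" by (simp add: of_nat_diff)
  qed
  finally show ?thesis unfolding FF_def by simp
qed

lemma prod_shift:
  "(\<Prod>i\<in>{d<..d+t}. (Q::int) ^ Suc m - Q ^ i) = Q ^ t * (\<Prod>i\<in>{d..<d+t}. Q ^ m - Q ^ i)"
proof (induction t)
  case 0 then show ?case by simp
next
  case (Suc t)
  have a: "{d<..d + Suc t} = insert (Suc (d+t)) {d<..d+t}" by auto
  have b: "{d..<d + Suc t} = insert (d+t) {d..<d+t}" by auto
  show ?case unfolding a b using Suc by (simp add: algebra_simps)
qed

lemma FF_rec:
  assumes "d \<le> k" "k \<le> m" "1 \<le> q"
  shows "FF q (Suc m) k d = FF q m k d + (q ^ (k - d) - 1) * q ^ m * FF q m (k - 1) d"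
proof (cases "d = k")
  case True then show ?thesis by (simp add: FF_def)
next
  case False
  then have dk: "d < k" using assms by simp
  define Q where "Q = int q"
  define P where "P = (\<Prod>i\<in>{Suc d..<k}. Q ^ m - Q ^ i)"
  have e1: "int (FF q (Suc m) k d) = Q ^ (d^2) * (Q ^ (k - d) * ((Q ^ m - Q ^ d) * P))"
  proof -
    have "int (FF q (Suc m) k d) = Q ^ (d^2) * (\<Prod>i\<in>{d<..d+(k-d)}. Q ^ Suc m - Q ^ i)"
      using FF_int[of k "Suc m" q d] assms dk unfolding Q_def
      by (simp add: atLeastSucAtMost_greaterThanAtMost)
    also have "\<dots> = Q ^ (d^2) * (Q ^ (k - d) * (\<Prod>i\<in>{d..<d+(k-d)}. Q ^ m - Q ^ i))"
      by (simp only: prod_shift)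
    also have "(\<Prod>i\<in>{d..<d+(k-d)}. Q ^ m - Q ^ i) = (Q ^ m - Q ^ d) * P"
      unfolding P_def using dk by (simp add: prod.atLeast_Suc_lessThan)
    finally show ?thesis .
  qed
  have e2: "int (FF q m k d) = Q ^ (d^2) * (P * (Q ^ m - Q ^ k))"
  proof -
    have "int (FF q m k d) = Q ^ (d^2) * (\<Prod>i\<in>{Suc d..<Suc k}. Q ^ m - Q ^ i)"
      using FF_int[of k m q d] assms unfolding Q_def
      by (simp add: atLeastLessThanSuc_atLeastAtMost)
    also have "(\<Prod>i\<in>{Suc d..<Suc k}. Q ^ m - Q ^ i) = P * (Q ^ m - Q ^ k)"
      unfolding P_def using dk by (simp add: prod.atLeastLessThan_Suc)
    finally show ?thesis .
  qed
  have e3: "int (FF q m (k - 1) d) = Q ^ (d^2) * P"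
  proof -
    have kk: "Suc (k - 1) = k" using dk by simp
    have "int (FF q m (k - 1) d) = Q ^ (d^2) * (\<Prod>i\<in>{Suc d..<Suc (k-1)}. Q ^ m - Q ^ i)"
      using FF_int[of "k-1" m q d] assms unfolding Q_def
      by (simp add: atLeastLessThanSuc_atLeastAtMost)
    then show ?thesis unfolding kk P_def .
  qed
  have e4: "int (q ^ (k - d) - 1) = Q ^ (k - d) - 1"
    using assms(3) unfolding Q_def by (simp add: of_nat_diff)
  have kd: "Q ^ (k - d) * Q ^ d = Q ^ k"
    using dk by (simp add: power_add[symmetric])
  have alg: "a*(b*((c - e)*p)) = a*(p*(c - b*e)) + (b - 1)*c*(a*p)" for a b c e p :: int
    by (simp add: algebra_simps)
  have "int (FF q (Suc m) k d) = int (FF q m k d + (q ^ (k - d) - 1) * q ^ m * FF q m (k - 1) d)"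
    unfolding of_nat_add of_nat_mult e1 e2 e3 e4 of_nat_power Q_def[symmetric] kd[symmetric]
    by (rule alg)
  then show ?thesis by (simp only: of_nat_eq_iff)
qed


locale fvs = vector_space scale for scale :: "'a::field \<Rightarrow> 'v::ab_group_add \<Rightarrow> 'v" (infixr \<open>*s\<close> 75) +
  assumes finA: "finite (UNIV::'a set)" and finV: "finite (UNIV::'v set)"
begin

lemma ex_basis_UNIV: "\<exists>B. independent B \<and> span B = UNIV"
proof -
  obtain B where "B \<subseteq> UNIV" "independent B" "UNIV \<subseteq> span B" "card B = dim (UNIV::'v set)"
    using basis_exists[of UNIV] by blast
  then show ?thesis by auto
qed

sublocale fd: finite_dimensional_vector_space scale "SOME B. independent B \<and> span B = UNIV"
proof
  have *: "independent (SOME B. independent B \<and> span B = UNIV) \<and> span (SOME B. independent B \<and> span B = UNIV) = UNIV"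
    using someI_ex[OF ex_basis_UNIV] .
  show "finite (SOME B. independent B \<and> span B = UNIV)" by (rule finite_subset[OF subset_UNIV finV])
  show "independent (SOME B. independent B \<and> span B = UNIV)" using * by blast
  show "span (SOME B. independent B \<and> span B = UNIV) = UNIV" using * by blast
qed

lemma fin[simp]: "finite (S::'v set)" by (rule finite_subset[OF subset_UNIV finV])

lemma fin_fun[simp]: "finite (S::('v\<Rightarrow>'v) set)"
proof -
  have "(UNIV::('v\<Rightarrow>'v) set) = PiE UNIV (\<lambda>_. UNIV)" by (simp add: PiE_UNIV_domain)
  moreover have "finite (PiE (UNIV::'v set) (\<lambda>_. UNIV::'v set))" by (rule finite_PiE) auto
  ultimately have "finite (UNIV::('v\<Rightarrow>'v) set)" by simp
  then show ?thesis by (rule finite_subset[OF subset_UNIV])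
qed


lemma card_span: assumes "independent B" shows "card (span B) = card (UNIV::'a set) ^ card B"
proof -
  have fB: "finite B" by simp
  let ?g = "\<lambda>f. \<Sum>b\<in>B. f b *s b"
  have "span B = ?g ` (PiE B (\<lambda>_. UNIV))"
  proof
    show "span B \<subseteq> ?g ` (PiE B (\<lambda>_. UNIV))"
    proof
      fix x assume "x \<in> span B"
      then obtain u where x: "x = (\<Sum>v\<in>B. u v *s v)" using span_finite[OF fB] by auto
      have "restrict u B \<in> PiE B (\<lambda>_. UNIV)" by simp
      moreover have "?g (restrict u B) = x" unfolding x by (rule sum.cong) auto
      ultimately show "x \<in> ?g ` (PiE B (\<lambda>_. UNIV))" by (intro image_eqI[of x ?g "restrict u B"]) simp_all
    qed
    show "?g ` (PiE B (\<lambda>_. UNIV)) \<subseteq> span B"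
    proof
      fix y assume "y \<in> ?g ` (PiE B (\<lambda>_. UNIV))"
      then obtain f where "y = ?g f" by blast
      then show "y \<in> span B" using span_finite[OF fB] by simp
    qed
  qed
  moreover have "inj_on ?g (PiE B (\<lambda>_. UNIV))"
  proof
    fix f g assume f: "f \<in> PiE B (\<lambda>_. UNIV)" and g: "g \<in> PiE B (\<lambda>_. UNIV)" and eq: "?g f = ?g g"
    have "(\<Sum>b\<in>B. (f b - g b) *s b) = 0"
      using eq by (simp add: scale_left_diff_distrib sum_subtractf)
    then have fg: "f b - g b = 0" if "b \<in> B" for b
      by (rule independentD[OF assms fB order_refl _ that])
    show "f = g" using f g fg by (auto intro: PiE_ext)
  qed
  ultimately have "card (span B) = card (PiE B (\<lambda>_. (UNIV::'a set)))" by (simp add: card_image)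
  also have "\<dots> = card (UNIV::'a set) ^ card B" by (simp add: card_PiE )
  finally show ?thesis .
qed

lemma card_subspace: assumes "subspace Y" shows "card Y = card (UNIV::'a set) ^ dim Y"
proof -
  obtain B where B: "B \<subseteq> Y" "independent B" "Y \<subseteq> span B" "card B = dim Y"
    using basis_exists[of Y] by blast
  have "span B = Y" using B assms span_subspace by blast
  then show ?thesis using card_span B by metis
qed

definition lin_on :: "'v set \<Rightarrow> ('v \<Rightarrow> 'v) \<Rightarrow> bool" where
  "lin_on W T \<longleftrightarrow> (\<forall>x\<in>W. \<forall>y\<in>W. T (x + y) = T x + T y) \<and> (\<forall>c. \<forall>x\<in>W. T (c *s x) = c *s T x)"

definition maps :: "'v set \<Rightarrow> 'v set \<Rightarrow> ('v \<Rightarrow> 'v) set" where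
  "maps W Y = {T. lin_on W T \<and> (\<forall>x. x \<notin> W \<longrightarrow> T x = 0) \<and> (\<forall>x\<in>W. T x \<in> Y)}"

lemma lin_on_sum:
  assumes "lin_on W T" "subspace W" "\<And>i. i \<in> I \<Longrightarrow> g i \<in> W"
  shows "T (sum g I) = (\<Sum>i\<in>I. T (g i))"
  using assms(3)
proof (induction I rule: infinite_finite_induct)
  case (infinite A) then show ?case
    using assms(1,2) unfolding lin_on_def
    by (metis add.right_neutral add_left_cancel subspace_0 sum.infinite)
next
  case empty then show ?case
    using assms(1,2) unfolding lin_on_def
    by (metis add.right_neutral add_left_cancel subspace_0 sum.empty)
next
  case (insert x F)
  have "sum g F \<in> W" using insert.prems assms(2) by (auto intro: subspace_sum)
  then show ?case using insert assms(1) unfolding lin_on_def by auto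
qed

lemma lin_on_basis:
  assumes "lin_on W T" "subspace W" "independent B" "B \<subseteq> W" "x \<in> span B"
  shows "T x = (\<Sum>b\<in>B. representation B x b *s T b)"
proof -
  have "(\<Sum>b\<in>B. representation B x b *s b) = x"
    by (rule sum_representation_eq[OF assms(3,5)]) auto
  then have "T x = T (\<Sum>b\<in>B. representation B x b *s b)" by simp
  also have "\<dots> = (\<Sum>b\<in>B. T (representation B x b *s b))"
    using assms by (intro lin_on_sum) (auto intro: subspace_scale)
  also have "\<dots> = (\<Sum>b\<in>B. representation B x b *s T b)"
    using assms unfolding lin_on_def by (intro sum.cong) auto
  finally show ?thesis .
qed

lemma lin_on_mono: "lin_on W T \<Longrightarrow> K \<subseteq> W \<Longrightarrow> lin_on K T"
  unfolding lin_on_def by blast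

lemma fiber_card:
  assumes BK: "BK \<subseteq> BW" and BW: "independent BW" and Y: "subspace Y"
    and S: "S \<in> maps (span BK) Y"
  shows "card {T \<in> maps (span BW) Y. \<forall>x\<in>span BK. T x = S x} = card Y ^ (card BW - card BK)"
proof -
  let ?W = "span BW" and ?K = "span BK"
  let ?A = "{T \<in> maps ?W Y. \<forall>x\<in>?K. T x = S x}"
  let ?P = "PiE BW (\<lambda>b. if b \<in> BK then {S b} else Y)"
  have indK: "independent BK" by (rule independent_mono[OF BW BK])
  have KW: "?K \<subseteq> ?W" by (rule span_mono[OF BK])
  have inj: "inj_on (\<lambda>T. restrict T BW) ?A"
  proof
    fix T T' assume T: "T \<in> ?A" and T': "T' \<in> ?A" and eq: "restrict T BW = restrict T' BW"
    show "T = T'"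
    proof
      fix x show "T x = T' x"
      proof (cases "x \<in> ?W")
        case True
        have "T x = (\<Sum>b\<in>BW. representation BW x b *s T b)"
          using T True BW by (intro lin_on_basis[of ?W]) (auto simp: maps_def span_superset)
        also have "\<dots> = (\<Sum>b\<in>BW. representation BW x b *s T' b)"
        proof (intro sum.cong refl)
          fix b assume "b \<in> BW" then show "representation BW x b *s T b = representation BW x b *s T' b"
            using fun_cong[OF eq, of b] by simp
        qed
        also have "\<dots> = T' x"
          using T' True BW by (intro lin_on_basis[of ?W, symmetric]) (auto simp: maps_def span_superset)
        finally show ?thesis .
      next
        case False then show ?thesis using T T' by (auto simp: maps_def)
      qed
    qed
  qed
  have img: "(\<lambda>T. restrict T BW) ` ?A = ?P"
  proof
    show "(\<lambda>T. restrict T BW) ` ?A \<subseteq> ?P"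
    proof
      fix f assume "f \<in> (\<lambda>T. restrict T BW) ` ?A"
      then obtain T where T: "T \<in> ?A" and f: "f = restrict T BW" by blast
      show "f \<in> ?P" using T unfolding f maps_def
        using span_superset[of BK] span_superset[of BW] BK by (auto simp: PiE_def Pi_def)
    qed
    show "?P \<subseteq> (\<lambda>T. restrict T BW) ` ?A"
    proof
      fix f assume f: "f \<in> ?P"
      define T where "T x = (if x \<in> ?W then (\<Sum>b\<in>BW. representation BW x b *s f b) else 0)" for x
      have fY: "f b \<in> Y" if "b \<in> BW" for b
      proof (cases "b \<in> BK")
        case True
        then have "f b \<in> {S b}" using PiE_mem[OF f that] by simp
        moreover have "S b \<in> Y" using True S span_superset[of BK] unfolding maps_def by blast
        ultimately show ?thesis by simp
      next
        case False then show ?thesis using PiE_mem[OF f that] by simp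
      qed
      have Tb: "T b = f b" if "b \<in> BW" for b
      proof -
        have "T b = (\<Sum>v\<in>BW. (if v = b then 1 else 0) *s f v)"
          using that span_superset[of BW] representation_basis[OF BW that] by (auto simp: T_def)
        also have "\<dots> = (\<Sum>v\<in>BW. if v = b then f v else 0)"
          by (intro sum.cong) auto
        also have "\<dots> = f b" using that by simp
        finally show ?thesis .
      qed
      have lin: "lin_on ?W T"
        unfolding lin_on_def
      proof (intro conjI ballI allI)
        fix x y assume x: "x \<in> ?W" and y: "y \<in> ?W"
        then show "T (x + y) = T x + T y"
          by (simp add: T_def span_add representation_add[OF BW] scale_left_distrib sum.distrib)
      next
        fix c x assume x: "x \<in> ?W"
        then show "T (c *s x) = c *s T x"
          by (simp add: T_def span_scale representation_scale[OF BW] scale_sum_right)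
      qed
      have TM: "T \<in> maps ?W Y"
        unfolding maps_def using lin fY Y
        by (auto simp: T_def intro!: subspace_sum subspace_scale)
      have agree: "\<forall>x\<in>?K. T x = S x"
      proof
        fix x assume x: "x \<in> ?K"
        have "T x = (\<Sum>b\<in>BK. representation BK x b *s T b)"
          using lin_on_mono[OF lin KW] x indK
          by (intro lin_on_basis[of ?K]) (auto simp: span_superset)
        also have "\<dots> = (\<Sum>b\<in>BK. representation BK x b *s S b)"
        proof (intro sum.cong refl)
          fix b assume b: "b \<in> BK"
          then have b': "b \<in> BW" using BK by auto
          have "f b \<in> {S b}" using PiE_mem[OF f b'] b by simp
          then show "representation BK x b *s T b = representation BK x b *s S b"
            using Tb[OF b'] by simp
        qed
        also have "\<dots> = S x"
          using S x indK by (intro lin_on_basis[of ?K, symmetric]) (auto simp: maps_def span_superset)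
        finally show "T x = S x" .
      qed
      have "restrict T BW = f" using f Tb by (auto simp: PiE_def extensional_def restrict_def)
      then show "f \<in> (\<lambda>T. restrict T BW) ` ?A" using TM agree by blast
    qed
  qed
  have "card ?A = card ?P" using card_image[OF inj] img by simp
  also have "\<dots> = (\<Prod>b\<in>BW. card (if b \<in> BK then {S b} else Y))"
    by (rule card_PiE) simp
  also have "\<dots> = (\<Prod>b\<in>BW. if b \<in> BK then 1 else card Y)"
    by (intro prod.cong) auto
  also have "\<dots> = card Y ^ card (BW - BK)"
    by (simp add: prod.If_cases Diff_eq)
  also have "card (BW - BK) = card BW - card BK"
    using BK by (simp add: card_Diff_subset)
  finally show ?thesis .
qed


definition Inv :: "'v set \<Rightarrow> ('v \<Rightarrow> 'v) \<Rightarrow> 'v set" where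
  "Inv W T = {x. \<forall>j. (T ^^ j) x \<in> W}"

definition restr :: "'v set \<Rightarrow> ('v \<Rightarrow> 'v) \<Rightarrow> ('v \<Rightarrow> 'v)" where
  "restr K A = (\<lambda>x. if x \<in> K then A x else 0)"

lemma Inv_sub: "Inv W T \<subseteq> W"
proof
  fix x assume "x \<in> Inv W T"
  then have "(T ^^ 0) x \<in> W" unfolding Inv_def by blast
  then show "x \<in> W" by simp
qed

lemma iter_agree:
  assumes "\<And>j. (f ^^ j) x \<in> S" "\<And>z. z \<in> S \<Longrightarrow> g z = f z"
  shows "(g ^^ j) x = (f ^^ j) x"
proof (induction j)
  case 0 then show ?case by simp
next
  case (Suc j)
  have "(g ^^ Suc j) x = g ((g ^^ j) x)" by simp
  also have "\<dots> = g ((f ^^ j) x)" using Suc by simp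
  also have "\<dots> = f ((f ^^ j) x)" using assms by blast
  finally show ?case by simp
qed

lemma lin_on_0: assumes "lin_on W T" "subspace W" shows "T 0 = 0"
proof -
  have "T (0 + 0) = T 0 + T 0" using assms subspace_0 unfolding lin_on_def by blast
  then show ?thesis by simp
qed

lemma Inv_props:
  assumes lin: "lin_on W T" and W: "subspace W"
  shows "subspace (Inv W T)" "T ` Inv W T \<subseteq> Inv W T"
    "\<And>U'. subspace U' \<Longrightarrow> U' \<subseteq> W \<Longrightarrow> T ` U' \<subseteq> U' \<Longrightarrow> U' \<subseteq> Inv W T"
proof -
  have T0: "T 0 = 0" by (rule lin_on_0[OF lin W])
  have z: "(T ^^ j) 0 = 0" for j by (induction j) (simp_all add: T0)
  have add: "(T ^^ j) (x + y) = (T ^^ j) x + (T ^^ j) y"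
    if "x \<in> Inv W T" "y \<in> Inv W T" for x y j
  proof (induction j)
    case 0 then show ?case by simp
  next
    case (Suc j)
    have "(T ^^ j) x \<in> W" "(T ^^ j) y \<in> W" using that unfolding Inv_def by blast+
    then show ?case using Suc lin unfolding lin_on_def by simp
  qed
  have sc: "(T ^^ j) (c *s x) = c *s (T ^^ j) x"
    if "x \<in> Inv W T" for x c j
  proof (induction j)
    case 0 then show ?case by simp
  next
    case (Suc j)
    have "(T ^^ j) x \<in> W" using that unfolding Inv_def by blast
    then show ?case using Suc lin unfolding lin_on_def by simp
  qed
  show "subspace (Inv W T)"
    unfolding subspace_def
  proof (intro conjI ballI allI)
    show "0 \<in> Inv W T" unfolding Inv_def using z W subspace_0 by simp
  next
    fix x y assume x: "x \<in> Inv W T" and y: "y \<in> Inv W T"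
    have "(T ^^ j) (x + y) \<in> W" for j
      using add[OF x y, of j] x y W subspace_add unfolding Inv_def by auto
    then show "x + y \<in> Inv W T" unfolding Inv_def by blast
  next
    fix c x assume x: "x \<in> Inv W T"
    have "(T ^^ j) (c *s x) \<in> W" for j
      using sc[OF x, of j c] x W subspace_scale unfolding Inv_def by auto
    then show "c *s x \<in> Inv W T" unfolding Inv_def by blast
  qed
  show "T ` Inv W T \<subseteq> Inv W T"
  proof
    fix y assume "y \<in> T ` Inv W T"
    then obtain x where x: "x \<in> Inv W T" and y: "y = T x" by blast
    have "(T ^^ j) y \<in> W" for j
    proof -
      have e: "(T ^^ j) y = (T ^^ Suc j) x" unfolding y by (simp add: funpow_swap1)
      have "(T ^^ Suc j) x \<in> W" using x unfolding Inv_def mem_Collect_eq by (rule spec)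
      then show ?thesis using e by simp
    qed
    then show "y \<in> Inv W T" unfolding Inv_def by blast
  qed
  fix U' assume U': "subspace U'" "U' \<subseteq> W" "T ` U' \<subseteq> U'"
  show "U' \<subseteq> Inv W T"
  proof
    fix x assume x: "x \<in> U'"
    have "(T ^^ j) x \<in> U'" for j
    proof (induction j)
      case 0 then show ?case using x by simp
    next
      case (Suc j) then show ?case using U'(3) by auto
    qed
    then show "x \<in> Inv W T" unfolding Inv_def using U'(2) by auto
  qed
qed

lemma max_inv_sub_eq:
  assumes "lin_on W T" "subspace W"
  shows "max_inv_sub scale W T = Inv W T"
  unfolding max_inv_sub_def
proof (rule the_equality)
  show "subspace (Inv W T) \<and> Inv W T \<subseteq> W \<and> T ` Inv W T \<subseteq> Inv W T \<and>
    (\<forall>U'. subspace U' \<and> U' \<subseteq> W \<and> T ` U' \<subseteq> U' \<longrightarrow> U' \<subseteq> Inv W T)"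
  proof (intro conjI allI impI)
    show "subspace (Inv W T)" "T ` Inv W T \<subseteq> Inv W T" by (rule Inv_props[OF assms])+
    show "Inv W T \<subseteq> W" by (rule Inv_sub)
    fix U' assume "subspace U' \<and> U' \<subseteq> W \<and> T ` U' \<subseteq> U'"
    then show "U' \<subseteq> Inv W T" using Inv_props(3)[OF assms] by simp
  qed
next
  fix U assume U: "subspace U \<and> U \<subseteq> W \<and> T ` U \<subseteq> U \<and>
    (\<forall>U'. subspace U' \<and> U' \<subseteq> W \<and> T ` U' \<subseteq> U' \<longrightarrow> U' \<subseteq> U)"
  have "U \<subseteq> Inv W T" using U by (intro Inv_props(3)[OF assms]) simp_all
  moreover have "Inv W T \<subseteq> U"
  proof -
    have all: "\<forall>U'. subspace U' \<and> U' \<subseteq> W \<and> T ` U' \<subseteq> U' \<longrightarrow> U' \<subseteq> U" using U by simp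
    have "subspace (Inv W T) \<and> Inv W T \<subseteq> W \<and> T ` Inv W T \<subseteq> Inv W T"
      using Inv_props(1,2)[OF assms] Inv_sub[of W T] by simp
    then show ?thesis using spec[OF all, of "Inv W T"] by simp
  qed
  ultimately show "U = Inv W T" by (rule antisym)
qed

lemma Inv_decomp:
  assumes WV: "W \<subseteq> V'" and V': "subspace V'" and A: "A \<in> maps W V'" and P: "P \<in> maps W L"
    and VL: "\<And>z. z \<in> V' \<Longrightarrow> z \<in> L \<Longrightarrow> z = 0"
  shows "Inv W (\<lambda>x. A x + P x) = Inv {x\<in>W. P x = 0} (restr {x\<in>W. P x = 0} A)"
proof -
  let ?T = "\<lambda>x. A x + P x" and ?K = "{x\<in>W. P x = 0}"
  let ?R = "restr ?K A"
  have kf: "P z = 0" if z: "z \<in> W" "?T z \<in> W" for z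
  proof -
    have "A z \<in> V'" using A z unfolding maps_def by simp
    moreover have "?T z \<in> V'" using z WV by (simp add: subsetD)
    ultimately have "?T z - A z \<in> V'" by (intro subspace_diff[OF V'])
    then have "P z \<in> V'" by simp
    moreover have "P z \<in> L" using P z unfolding maps_def by simp
    ultimately show ?thesis by (rule VL)
  qed
  show ?thesis
  proof (intro equalityI subsetI)
    fix x assume x: "x \<in> Inv W ?T"
    have inK: "(?T ^^ j) x \<in> ?K" for j
    proof -
      have "(?T ^^ j) x \<in> W" "(?T ^^ Suc j) x \<in> W" using x unfolding Inv_def mem_Collect_eq by (rule spec)+
      then show ?thesis using kf by simp
    qed
    have agr: "?R z = ?T z" if "z \<in> ?K" for z using that by (simp add: restr_def)
    have "(?R ^^ j) x = (?T ^^ j) x" for j by (rule iter_agree[OF inK agr])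
    then show "x \<in> Inv ?K ?R" using inK unfolding Inv_def by simp
  next
    fix x assume x: "x \<in> Inv ?K ?R"
    have inK: "(?R ^^ j) x \<in> ?K" for j using x unfolding Inv_def mem_Collect_eq by (rule spec)
    have agr: "?T z = ?R z" if "z \<in> ?K" for z using that by (simp add: restr_def)
    have "(?T ^^ j) x = (?R ^^ j) x" for j by (rule iter_agree[OF inK agr])
    then show "x \<in> Inv W ?T" using inK unfolding Inv_def by simp
  qed
qed



lemma q_pos: "1 \<le> card (UNIV::'a set)"
proof -
  have "card (UNIV::'a set) > 0" using finA by (simp add: card_gt_0_iff)
  then show ?thesis by simp
qed

lemma basis_of:
  assumes "subspace W"
  obtains B where "independent B" "span B = W" "card B = dim W"
proof -
  obtain B where B: "B \<subseteq> W" "independent B" "W \<subseteq> span B" "card B = dim W"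
    using basis_exists[of W] by blast
  have "span B = W" using span_subspace[OF B(1) B(3) assms] .
  then show ?thesis using that B by simp
qed

lemma basis_ext:
  assumes K: "subspace K" and W: "subspace W" and KW: "K \<subseteq> W"
  obtains BK BW where "BK \<subseteq> BW" "independent BW" "span BK = K" "span BW = W"
    "card BK = dim K" "card BW = dim W"
proof -
  obtain BK where BK: "independent BK" "span BK = K" "card BK = dim K"
    using basis_of[OF K] by blast
  have "BK \<subseteq> W" using BK(2) KW span_superset[of BK] by simp
  then obtain B where B: "BK \<subseteq> B" "B \<subseteq> W" "independent B" "W \<subseteq> span B"
    using maximal_independent_subset_extend[of BK W] BK(1) by blast
  have sB: "span B = W" using span_subspace[OF B(2) B(4) W] .
  have cB: "card B = dim W" using basis_card_eq_dim[OF B(2) B(4) B(3)] .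
  show ?thesis using that[OF B(1) B(3) BK(2) sB BK(3) cB] .
qed

lemma fiber_card':
  assumes K: "subspace K" and W: "subspace W" and KW: "K \<subseteq> W" and Y: "subspace Y"
    and S: "S \<in> maps K Y"
  shows "card {T \<in> maps W Y. \<forall>x\<in>K. T x = S x} = card (UNIV::'a set) ^ (dim Y * (dim W - dim K))"
proof -
  obtain BK BW where b: "BK \<subseteq> BW" "independent BW" "span BK = K" "span BW = W"
    "card BK = dim K" "card BW = dim W"
    using basis_ext[OF K W KW] by blast
  have "card {T \<in> maps W Y. \<forall>x\<in>K. T x = S x} = card Y ^ (card BW - card BK)"
    using fiber_card[OF b(1) b(2) Y] S unfolding b(3) b(4) by simp
  also have "\<dots> = card (UNIV::'a set) ^ (dim Y * (dim W - dim K))"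
    unfolding card_subspace[OF Y] b(5) b(6) by (simp add: power_mult)
  finally show ?thesis .
qed

lemma zero_maps: "subspace K \<Longrightarrow> (\<lambda>x. 0) \<in> maps K Y \<longleftrightarrow> 0 \<in> Y \<or> K = {}"
  unfolding maps_def lin_on_def by auto

lemma maps_0: assumes "T \<in> maps W Y" "subspace W" shows "T 0 = 0"
  using lin_on_0[of W T] assms unfolding maps_def by simp

lemma card_maps:
  assumes W: "subspace W" and Y: "subspace Y"
  shows "card (maps W Y) = card (UNIV::'a set) ^ (dim Y * dim W)"
proof -
  have z: "(\<lambda>x. 0) \<in> maps {0} Y" using subspace_0[OF Y] by (simp add: maps_def lin_on_def)
  have "{T \<in> maps W Y. \<forall>x\<in>{0}. T x = 0} = maps W Y"
    using maps_0[OF _ W] by auto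
  then have "card (maps W Y) = card {T \<in> maps W Y. \<forall>x\<in>{0}. T x = (\<lambda>x. 0) x}" by simp
  also have "\<dots> = card (UNIV::'a set) ^ (dim Y * (dim W - dim {0::'v}))"
    by (rule fiber_card'[OF subspace_single_0 W _ Y z]) (simp add: subspace_0[OF W])
  finally show ?thesis by simp
qed

lemma kernel_subspace:
  assumes P: "P \<in> maps W Y" and W: "subspace W"
  shows "subspace {x\<in>W. P x = 0}"
proof -
  have lin: "lin_on W P" using P unfolding maps_def by simp
  show ?thesis unfolding subspace_def
  proof (intro conjI ballI allI)
    show "0 \<in> {x\<in>W. P x = 0}" using subspace_0[OF W] maps_0[OF P W] by simp
  next
    fix x y assume "x \<in> {x\<in>W. P x = 0}" "y \<in> {x\<in>W. P x = 0}"
    then show "x + y \<in> {x\<in>W. P x = 0}" using lin subspace_add[OF W] unfolding lin_on_def by simp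
  next
    fix c x assume "x \<in> {x\<in>W. P x = 0}"
    then show "c *s x \<in> {x\<in>W. P x = 0}" using lin subspace_scale[OF W] unfolding lin_on_def by simp
  qed
qed

lemma dim_kernel:
  assumes P: "P \<in> maps W (span {e})" and W: "subspace W" and e: "e \<noteq> 0"
    and nz: "P \<noteq> (\<lambda>x. 0)"
  shows "dim {x\<in>W. P x = 0} + 1 = dim W"
proof -
  let ?K = "{x\<in>W. P x = 0}"
  have lin: "lin_on W P" using P unfolding maps_def by simp
  obtain w where pw: "P w \<noteq> 0" using nz by auto
  have w: "w \<in> W" using pw P unfolding maps_def by auto
  obtain c0 where c0: "P w = c0 *s e" using P w unfolding maps_def span_singleton by auto
  have c0nz: "c0 \<noteq> 0" using pw c0 by auto
  have Ksub: "subspace ?K" by (rule kernel_subspace[OF P W])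
  have "W \<subseteq> span (insert w ?K)"
  proof
    fix x assume x: "x \<in> W"
    obtain c where c: "P x = c *s e" using P x unfolding maps_def span_singleton by auto
    define a where "a = c / c0"
    have add: "\<And>x y. x \<in> W \<Longrightarrow> y \<in> W \<Longrightarrow> P (x + y) = P x + P y"
      and hom: "\<And>c x. x \<in> W \<Longrightarrow> P (c *s x) = c *s P x"
      using lin unfolding lin_on_def by blast+
    have ws: "(- a) *s w \<in> W" using w subspace_scale[OF W] by blast
    have y: "x + (- a) *s w \<in> W" using x ws subspace_add[OF W] by blast
    have "P (x + (- a) *s w) = P x + P ((- a) *s w)" by (rule add[OF x ws])
    also have "\<dots> = P x + (- a) *s P w" by (simp only: hom[OF w])
    also have "\<dots> = c *s e + (- a * c0) *s e" unfolding c c0 by simp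
    also have "\<dots> = 0" using c0nz unfolding a_def by (simp add: scale_left_distrib[symmetric])
    finally have "x + (- a) *s w \<in> ?K" using y by simp
    moreover have "x + (- a) *s w = x - a *s w" by simp
    ultimately have "x - a *s w \<in> span ?K" using span_superset[of ?K] by (metis subsetD)
    then show "x \<in> span (insert w ?K)" unfolding span_breakdown_eq by blast
  qed
  moreover have "span (insert w ?K) \<subseteq> W" using w by (intro span_minimal[OF _ W]) auto
  ultimately have "span (insert w ?K) = W" by (rule antisym[rotated])
  then have "dim W = dim (insert w ?K)" using dim_span[of "insert w ?K"] by simp
  also have "\<dots> = dim ?K + 1"
  proof -
    have sK: "span ?K = ?K" using Ksub by simp
    have "w \<notin> span ?K"
    proof
      assume "w \<in> span ?K"
      then have "w \<in> ?K" by (simp only: sK)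
      then show False using pw by simp
    qed
    then show ?thesis by (simp add: fd.dim_insert)
  qed
  finally show ?thesis by simp
qed



lemma split_space:
  assumes V: "subspace V" and W: "subspace W" and WV: "W \<subseteq> V" and ne: "W \<noteq> V"
  obtains V' e c where "subspace V'" "W \<subseteq> V'" "V' \<subseteq> V" "e \<in> V" "e \<noteq> 0"
    "dim V = Suc (dim V')"
    "\<And>z. z \<in> V' \<Longrightarrow> z \<in> span {e} \<Longrightarrow> z = 0"
    "\<And>v. v \<in> V \<Longrightarrow> v - c v *s e \<in> V'"
    "\<And>u v. u \<in> V \<Longrightarrow> v \<in> V \<Longrightarrow> c (u + v) = c u + c v"
    "\<And>a v. v \<in> V \<Longrightarrow> c (a *s v) = a * c v"
proof -
  obtain BW BV where b: "BW \<subseteq> BV" "independent BV" "span BW = W" "span BV = V"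
    "card BW = dim W" "card BV = dim V"
    using basis_ext[OF W V WV] by blast
  have "\<not> BV \<subseteq> BW"
  proof
    assume "BV \<subseteq> BW"
    then have "V \<subseteq> W" using span_mono[of BV BW] b(3,4) by simp
    then show False using WV ne by simp
  qed
  then obtain e where e: "e \<in> BV" "e \<notin> BW" by blast
  define V' where "V' = span (BV - {e})"
  define c where "c v = representation BV v e" for v
  have indV': "independent (BV - {e})" using independent_mono[OF b(2)] by blast
  have sV': "subspace V'" unfolding V'_def by simp
  have WV': "W \<subseteq> V'" unfolding V'_def b(3)[symmetric] using e b(1) by (intro span_mono) blast
  have V'V: "V' \<subseteq> V" unfolding V'_def b(4)[symmetric] by (intro span_mono) blast
  have eV: "e \<in> V" using e(1) span_superset[of BV] b(4) by blast
  have enz: "e \<noteq> 0" using e(1) b(2) dependent_zero by blast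
  have dimV': "dim V' = card BV - 1"
    unfolding V'_def dim_span_eq_card_independent[OF indV'] using e(1) by simp
  have cpos: "card BV \<ge> 1" using e(1) by (simp add: card_gt_0_iff Suc_le_eq) blast
  have dimV: "dim V = Suc (dim V')" using dimV' cpos b(6) by simp
  have enot: "e \<notin> V'"
  proof
    assume "e \<in> V'"
    then have "\<exists>a\<in>BV. a \<in> span (BV - {a})" using e(1) unfolding V'_def by blast
    then have "dependent BV" unfolding dependent_def by simp
    then show False using b(2) by simp
  qed
  have VL: "z = 0" if z: "z \<in> V'" "z \<in> span {e}" for z
  proof -
    obtain a where a: "z = a *s e" using z(2) unfolding span_singleton by blast
    show ?thesis
    proof (cases "a = 0")
      case True then show ?thesis using a by simp
    next
      case False
      have "(1 / a) *s z \<in> V'" using z(1) sV' subspace_scale by blast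
      moreover have "(1 / a) *s z = e" using a False by simp
      ultimately show ?thesis using enot by simp
    qed
  qed
  have dec: "v - c v *s e \<in> V'" if v: "v \<in> V" for v
  proof -
    have vs: "v \<in> span BV" using v b(4) by simp
    have "(\<Sum>b\<in>BV. representation BV v b *s b) = v"
      by (rule sum_representation_eq[OF b(2) vs]) auto
    moreover have "(\<Sum>b\<in>BV. representation BV v b *s b) =
        representation BV v e *s e + (\<Sum>b\<in>BV - {e}. representation BV v b *s b)"
      by (rule sum.remove[OF _ e(1)]) simp
    ultimately have "v - c v *s e = (\<Sum>b\<in>BV - {e}. representation BV v b *s b)"
      unfolding c_def by (simp add: algebra_simps)
    also have "\<dots> \<in> V'" unfolding V'_def
      by (intro span_sum span_scale span_base) auto
    finally show ?thesis .
  qed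
  have cadd: "c (u + v) = c u + c v" if "u \<in> V" "v \<in> V" for u v
    using representation_add[OF b(2), of v u] that b(4) unfolding c_def by simp
  have cscale: "c (a *s v) = a * c v" if "v \<in> V" for a v
    using representation_scale[OF b(2), of v a] that b(4) unfolding c_def by simp
  show ?thesis
    by (rule that[OF sV' WV' V'V eV enz dimV VL dec cadd cscale])
qed

lemma decomp_bij:
  assumes V: "subspace V" and W: "subspace W" and V': "subspace V'" and WV': "W \<subseteq> V'"
    and V'V: "V' \<subseteq> V" and eV: "e \<in> V"
    and VL: "\<And>z. z \<in> V' \<Longrightarrow> z \<in> span {e} \<Longrightarrow> z = 0"
    and cdec: "\<And>v. v \<in> V \<Longrightarrow> v - c v *s e \<in> V'"
    and cadd: "\<And>u v. u \<in> V \<Longrightarrow> v \<in> V \<Longrightarrow> c (u + v) = c u + c v"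
    and cscale: "\<And>a v. v \<in> V \<Longrightarrow> c (a *s v) = a * c v"
  shows "bij_betw (\<lambda>(P, A). \<lambda>x. A x + P x) (maps W (span {e}) \<times> maps W V') (maps W V)"
  unfolding bij_betw_def
proof (intro conjI)
  have LV: "span {e} \<subseteq> V" using eV by (intro span_minimal[OF _ V]) auto
  show "inj_on (\<lambda>(P, A). \<lambda>x. A x + P x) (maps W (span {e}) \<times> maps W V')"
  proof (rule inj_onI, clarify)
    fix P A P' A'
    assume P: "P \<in> maps W (span {e})" and A: "A \<in> maps W V'"
      and P': "P' \<in> maps W (span {e})" and A': "A' \<in> maps W V'"
      and eq: "(\<lambda>x. A x + P x) = (\<lambda>x. A' x + P' x)"
    have both: "A x = A' x \<and> P x = P' x" for x
    proof (cases "x \<in> W")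
      case True
      have e1: "A x + P x = A' x + P' x" using fun_cong[OF eq, of x] by simp
      have "A x - A' x \<in> V'" using A A' True subspace_diff[OF V'] unfolding maps_def by simp
      moreover have "A x - A' x = P' x - P x" using e1 by (simp add: algebra_simps)
      moreover have "P' x - P x \<in> span {e}" using P P' True span_diff unfolding maps_def by simp
      ultimately have d: "P' x - P x \<in> V'" "P' x - P x \<in> span {e}" by simp_all
      have "P' x - P x = 0" by (rule VL[OF d])
      then show ?thesis using e1 by simp
    next
      case False then show ?thesis using A A' P P' unfolding maps_def by simp
    qed
    show "P = P' \<and> A = A'" using both by auto
  qed
  show "(\<lambda>(P, A). \<lambda>x. A x + P x) ` (maps W (span {e}) \<times> maps W V') = maps W V"
  proof (intro equalityI subsetI)
    fix T assume "T \<in> (\<lambda>(P, A). \<lambda>x. A x + P x) ` (maps W (span {e}) \<times> maps W V')"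
    then obtain P A where P: "P \<in> maps W (span {e})" and A: "A \<in> maps W V'"
      and T: "T = (\<lambda>x. A x + P x)" by (auto simp: image_iff)
    have linP: "lin_on W P" and linA: "lin_on W A" using P A unfolding maps_def by simp_all
    have "lin_on W T" unfolding T lin_on_def using linP linA unfolding lin_on_def
      by (simp add: algebra_simps scale_right_distrib)
    moreover have "\<forall>x. x \<notin> W \<longrightarrow> T x = 0" using P A unfolding T maps_def by simp
    moreover have "\<forall>x\<in>W. T x \<in> V"
    proof
      fix x assume x: "x \<in> W"
      have "A x \<in> V" using A x V'V unfolding maps_def by auto
      moreover have "P x \<in> V" using P x LV unfolding maps_def by auto
      ultimately show "T x \<in> V" unfolding T by (rule subspace_add[OF V])
    qed
    ultimately show "T \<in> maps W V" unfolding maps_def by simp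
  next
    fix T assume T: "T \<in> maps W V"
    have linT: "lin_on W T" using T unfolding maps_def by simp
    have TV: "T x \<in> V" if "x \<in> W" for x using T that unfolding maps_def by simp
    have T0: "T x = 0" if "x \<notin> W" for x using T that unfolding maps_def by simp
    define P where "P x = (if x \<in> W then c (T x) *s e else 0)" for x
    define A where "A x = T x - P x" for x
    have linP: "lin_on W P" unfolding lin_on_def
    proof (intro conjI ballI allI)
      fix x y assume x: "x \<in> W" and y: "y \<in> W"
      have "T (x + y) = T x + T y" using linT x y unfolding lin_on_def by simp
      then show "P (x + y) = P x + P y"
        using x y subspace_add[OF W] cadd[OF TV[OF x] TV[OF y]] unfolding P_def
        by (simp add: scale_left_distrib)
    next
      fix a x assume x: "x \<in> W"
      have "T (a *s x) = a *s T x" using linT x unfolding lin_on_def by simp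
      then show "P (a *s x) = a *s P x"
        using x subspace_scale[OF W] cscale[OF TV[OF x]] unfolding P_def
        by simp
    qed
    have PM: "P \<in> maps W (span {e})" unfolding maps_def
      using linP by (auto simp: P_def intro: span_scale span_base)
    have linA: "lin_on W A" unfolding lin_on_def A_def
      using linP linT unfolding lin_on_def by (simp add: algebra_simps scale_right_diff_distrib)
    have AM: "A \<in> maps W V'" unfolding maps_def
      using linA cdec TV T0 by (auto simp: A_def P_def)
    have "T = (\<lambda>x. A x + P x)" unfolding A_def by simp
    then show "T \<in> (\<lambda>(P, A). \<lambda>x. A x + P x) ` (maps W (span {e}) \<times> maps W V')"
      using PM AM by force
  qed
qed



lemma restr_maps:
  assumes A: "A \<in> maps W Y" and KW: "K \<subseteq> W" and K: "subspace K"
  shows "restr K A \<in> maps K Y"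
proof -
  have "lin_on K A" using lin_on_mono[OF _ KW] A unfolding maps_def by simp
  then have "lin_on K (restr K A)"
    unfolding lin_on_def restr_def using subspace_add[OF K] subspace_scale[OF K] by simp
  then show ?thesis using A KW unfolding maps_def restr_def by auto
qed

lemma Inv_W:
  assumes "T \<in> maps W W" shows "Inv W T = W"
proof (intro equalityI Inv_sub subsetI)
  fix x assume x: "x \<in> W"
  have "(T ^^ j) x \<in> W" for j
  proof (induction j)
    case 0 then show ?case using x by simp
  next
    case (Suc j) then show ?case using assms unfolding maps_def by simp
  qed
  then show "x \<in> Inv W T" unfolding Inv_def by simp
qed

lemma count_G:
  assumes V': "subspace V'" and W: "subspace W" and WV': "W \<subseteq> V'"
    and K: "subspace K" and KW: "K \<subseteq> W" and U: "subspace U" and UK: "U \<subseteq> K"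
    and IH: "card {S \<in> maps K V'. Inv K S = U} = N"
  shows "card {A \<in> maps W V'. Inv K (restr K A) = U}
         = N * card (UNIV::'a set) ^ (dim V' * (dim W - dim K))"
proof -
  let ?Z = "{S \<in> maps K V'. Inv K S = U}"
  let ?F = "\<lambda>S. {A \<in> maps W V'. \<forall>x\<in>K. A x = S x}"
  have eq: "{A \<in> maps W V'. Inv K (restr K A) = U} = (\<Union>S\<in>?Z. ?F S)"
  proof (intro equalityI subsetI)
    fix A assume A: "A \<in> {A \<in> maps W V'. Inv K (restr K A) = U}"
    then have "restr K A \<in> ?Z" using restr_maps[OF _ KW K] by simp
    moreover have "A \<in> ?F (restr K A)" using A by (simp add: restr_def)
    ultimately show "A \<in> (\<Union>S\<in>?Z. ?F S)" by blast
  next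
    fix A assume "A \<in> (\<Union>S\<in>?Z. ?F S)"
    then obtain S where S: "S \<in> ?Z" and A: "A \<in> ?F S" by blast
    have "restr K A = S"
    proof
      fix x show "restr K A x = S x"
        using A S unfolding restr_def maps_def by auto
    qed
    then show "A \<in> {A \<in> maps W V'. Inv K (restr K A) = U}" using A S by simp
  qed
  have disj: "\<forall>S\<in>?Z. \<forall>S'\<in>?Z. S \<noteq> S' \<longrightarrow> ?F S \<inter> ?F S' = {}"
  proof (intro ballI impI)
    fix S S' assume S: "S \<in> ?Z" and S': "S' \<in> ?Z" and ne: "S \<noteq> S'"
    show "?F S \<inter> ?F S' = {}"
    proof (rule ccontr)
      assume "?F S \<inter> ?F S' \<noteq> {}"
      then obtain A where A: "A \<in> ?F S" "A \<in> ?F S'" by blast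
      have "S = S'"
      proof
        fix x show "S x = S' x"
        proof (cases "x \<in> K")
          case True then show ?thesis using A by simp
        next
          case False then show ?thesis using S S' unfolding maps_def by simp
        qed
      qed
      then show False using ne by simp
    qed
  qed
  have "card {A \<in> maps W V'. Inv K (restr K A) = U} = (\<Sum>S\<in>?Z. card (?F S))"
    unfolding eq by (rule card_UN_disjoint) (simp_all add: disj)
  also have "\<dots> = (\<Sum>S\<in>?Z. card (UNIV::'a set) ^ (dim V' * (dim W - dim K)))"
  proof (rule sum.cong[OF refl])
    fix S assume "S \<in> ?Z"
    then show "card (?F S) = card (UNIV::'a set) ^ (dim V' * (dim W - dim K))"
      using fiber_card'[OF K W KW V'] by simp
  qed
  also have "\<dots> = N * card (UNIV::'a set) ^ (dim V' * (dim W - dim K))"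
    using IH by simp
  finally show ?thesis .
qed


lemma main:
  assumes "dim V = n" "subspace V" "subspace W" "W \<subseteq> V" "subspace U" "U \<subseteq> W"
  shows "card {T \<in> maps W V. Inv W T = U} = FF (card (UNIV::'a set)) n (dim W) (dim U)"
  using assms
proof (induction n arbitrary: V W U rule: less_induct)
  case (less n V W U)
  note V = less.prems(2) and W = less.prems(3) and WV = less.prems(4)
    and U = less.prems(5) and UW = less.prems(6)
  let ?q = "card (UNIV::'a set)"
  have dU: "dim U \<le> dim W" using fd.dim_subset[OF UW] .
  show ?case
  proof (cases "W = V")
    case True
    have kn: "dim W = n" using True less.prems(1) by simp
    show ?thesis
    proof (cases "U = W")
      case True
      have "{T \<in> maps W V. Inv W T = U} = maps W W"
        using Inv_W \<open>W = V\<close> True by auto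
      then have "card {T \<in> maps W V. Inv W T = U} = ?q ^ (dim W * dim W)"
        using card_maps[OF W W] by simp
      then show ?thesis using True kn by (simp add: FF_def power2_eq_square)
    next
      case False
      have "{T \<in> maps W V. Inv W T = U} = {}"
        using Inv_W \<open>W = V\<close> False by auto
      moreover have "dim U < dim W"
      proof -
        have sU: "span U = U" using U by simp
        have sW: "span W = W" using W by simp
        have "span U \<subset> span W" unfolding sU sW using UW False by blast
        then show ?thesis by (rule fd.dim_psubset)
      qed
      then have "FF ?q n (dim W) (dim U) = 0"
        unfolding FF_def kn[symmetric]
        by (intro mult_eq_0_iff[THEN iffD2] disjI2 prod_zero) (auto intro!: bexI[of _ "dim W"])
      ultimately show ?thesis by simp
    qed
  next
    case False
    obtain V' e c where sp: "subspace V'" "W \<subseteq> V'" "V' \<subseteq> V" "e \<in> V" "e \<noteq> 0"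
      "dim V = Suc (dim V')"
      "\<And>z. z \<in> V' \<Longrightarrow> z \<in> span {e} \<Longrightarrow> z = 0"
      "\<And>v. v \<in> V \<Longrightarrow> v - c v *s e \<in> V'"
      "\<And>u v. u \<in> V \<Longrightarrow> v \<in> V \<Longrightarrow> c (u + v) = c u + c v"
      "\<And>a v. v \<in> V \<Longrightarrow> c (a *s v) = a * c v"
      using split_space[OF V W WV False] by blast
    define m where "m = dim V'"
    have nm: "n = Suc m" using sp(6) less.prems(1) m_def by simp
    have km: "dim W \<le> m" unfolding m_def using fd.dim_subset[OF sp(2)] .
    let ?L = "span {e}"
    let ?M = "maps W ?L"
    let ?K = "\<lambda>P. {x\<in>W. P x = 0}"
    let ?G = "\<lambda>P. {A \<in> maps W V'. Inv (?K P) (restr (?K P) A) = U}"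
    let ?psi = "\<lambda>(P, A). \<lambda>x. A x + P x"
    have bij: "bij_betw ?psi (?M \<times> maps W V') (maps W V)"
      by (rule decomp_bij[OF V W sp(1,2,3,4,7,8,9,10)])
    have VL: "\<And>z. z \<in> V' \<Longrightarrow> z \<in> ?L \<Longrightarrow> z = 0" by (rule sp(7))
    have img: "?psi ` (SIGMA P:?M. ?G P) = {T \<in> maps W V. Inv W T = U}"
    proof (intro equalityI subsetI)
      fix T assume "T \<in> ?psi ` (SIGMA P:?M. ?G P)"
      then obtain P A where P: "P \<in> ?M" and A: "A \<in> ?G P" and T: "T = (\<lambda>x. A x + P x)"
        by (auto simp: image_iff)
      have "T \<in> maps W V" using bij P A T unfolding bij_betw_def by force
      moreover have "Inv W T = U" unfolding T
        using Inv_decomp[OF sp(2,1), of A P ?L] A P VL by simp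
      ultimately show "T \<in> {T \<in> maps W V. Inv W T = U}" by simp
    next
      fix T assume T: "T \<in> {T \<in> maps W V. Inv W T = U}"
      then have "T \<in> ?psi ` (?M \<times> maps W V')" using bij unfolding bij_betw_def by simp
      then obtain P A where P: "P \<in> ?M" and A: "A \<in> maps W V'" and TT: "T = (\<lambda>x. A x + P x)"
        by (auto simp: image_iff)
      have "Inv (?K P) (restr (?K P) A) = U"
        using Inv_decomp[OF sp(2,1) A P VL] T TT by simp
      then show "T \<in> ?psi ` (SIGMA P:?M. ?G P)" using P A TT by force
    qed
    have inj: "inj_on ?psi (SIGMA P:?M. ?G P)"
    proof (rule inj_on_subset)
      show "inj_on ?psi (?M \<times> maps W V')" using bij unfolding bij_betw_def by simp
      show "(SIGMA P:?M. ?G P) \<subseteq> ?M \<times> maps W V'" by auto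
    qed
    have "card {T \<in> maps W V. Inv W T = U} = card (SIGMA P:?M. ?G P)"
      using card_image[OF inj] img by simp
    also have "\<dots> = (\<Sum>P\<in>?M. card (?G P))" by simp
    also have "\<dots> = (\<Sum>P\<in>?M. if U \<subseteq> ?K P then
        FF ?q m (dim (?K P)) (dim U) * ?q ^ (m * (dim W - dim (?K P))) else 0)"
    proof (rule sum.cong[OF refl])
      fix P assume P: "P \<in> ?M"
      have Ks: "subspace (?K P)" by (rule kernel_subspace[OF P W])
      have KW: "?K P \<subseteq> W" by auto
      show "card (?G P) = (if U \<subseteq> ?K P then
        FF ?q m (dim (?K P)) (dim U) * ?q ^ (m * (dim W - dim (?K P))) else 0)"
      proof (cases "U \<subseteq> ?K P")
        case True
        have IH: "card {S \<in> maps (?K P) V'. Inv (?K P) S = U} = FF ?q m (dim (?K P)) (dim U)"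
        proof -
          have mn: "m < n" using nm by simp
          have KV': "?K P \<subseteq> V'" using subset_trans[OF KW sp(2)] .
          show ?thesis using less.IH[OF mn _ sp(1) Ks KV' U True] m_def by simp
        qed
        show ?thesis using count_G[OF sp(1) W sp(2) Ks KW U True IH] True m_def by simp
      next
        case False
        have "?G P = {}"
        proof -
          have "Inv (?K P) S \<subseteq> ?K P" for S by (rule Inv_sub)
          then show ?thesis using False by auto
        qed
        then show ?thesis using False by simp
      qed
    qed
    also have "\<dots> = FF ?q m (dim W) (dim U)
        + (?q ^ (dim W - dim U) - 1) * ?q ^ m * FF ?q m (dim W - 1) (dim U)"
    proof -
      define g :: "('v \<Rightarrow> 'v) \<Rightarrow> nat" where "g = (\<lambda>P. if U \<subseteq> ?K P then
        FF ?q m (dim (?K P)) (dim U) * ?q ^ (m * (dim W - dim (?K P))) else 0)"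
      have z: "(\<lambda>x. 0) \<in> ?M" by (simp add: maps_def lin_on_def span_zero)
      have s0: "sum g ?M = g (\<lambda>x. 0) + sum g (?M - {\<lambda>x. 0})"
        by (rule sum.remove[OF fin_fun z])
      have f1: "sum g ?M = FF ?q m (dim W) (dim U) + sum g (?M - {\<lambda>x. 0})"
      proof -
        have "{x\<in>W. (0::'v) = 0} = W" by simp
        then have "g (\<lambda>x. 0) = FF ?q m (dim W) (dim U)" using UW unfolding g_def by simp
        then show ?thesis using s0 by simp
      qed
      have f2: "sum g (?M - {\<lambda>x. 0}) =
          (\<Sum>P\<in>?M - {\<lambda>x. 0}. if U \<subseteq> ?K P then FF ?q m (dim W - 1) (dim U) * ?q ^ m else 0)"
      proof (rule sum.cong[OF refl])
        fix P assume P: "P \<in> ?M - {\<lambda>x. 0}"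
        have dk: "dim (?K P) + 1 = dim W" using dim_kernel[of P W e] P W sp(5) by simp
        then have "dim (?K P) = dim W - 1" "dim W - dim (?K P) = 1" by simp_all
        then show "g P = (if U \<subseteq> ?K P then FF ?q m (dim W - 1) (dim U) * ?q ^ m else 0)"
          unfolding g_def by simp
      qed
      have f3: "(\<Sum>P\<in>?M - {\<lambda>x. 0}. if U \<subseteq> ?K P then FF ?q m (dim W - 1) (dim U) * ?q ^ m else 0)
          = card {P \<in> ?M - {\<lambda>x. 0}. U \<subseteq> ?K P} * (FF ?q m (dim W - 1) (dim U) * ?q ^ m)"
        by (simp add: sum.inter_filter[symmetric])
      have f4: "card {P \<in> ?M - {\<lambda>x. 0}. U \<subseteq> ?K P} = ?q ^ (dim W - dim U) - 1"
      proof -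
        have zU: "(\<lambda>x. 0) \<in> maps U ?L" by (simp add: maps_def lin_on_def span_zero)
        have dL: "dim ?L = 1" using sp(5) by simp
        have c1: "card {P \<in> ?M. \<forall>x\<in>U. P x = (\<lambda>x. 0) x} = ?q ^ (dim W - dim U)"
          using fiber_card'[OF U W UW subspace_span zU] dL by simp
        have "{P \<in> ?M - {\<lambda>x. 0}. U \<subseteq> ?K P} = {P \<in> ?M. \<forall>x\<in>U. P x = (\<lambda>x. 0) x} - {\<lambda>x. 0}"
          using UW by auto
        moreover have "(\<lambda>x. 0) \<in> {P \<in> ?M. \<forall>x\<in>U. P x = (\<lambda>x. 0) x}" using z by simp
        ultimately show ?thesis using c1 by (simp add: card_Diff_singleton)
      qed
      have "sum g ?M = FF ?q m (dim W) (dim U)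
        + (?q ^ (dim W - dim U) - 1) * (FF ?q m (dim W - 1) (dim U) * ?q ^ m)"
        unfolding f1 f2 f3 f4 ..
      also have "(?q ^ (dim W - dim U) - 1) * (FF ?q m (dim W - 1) (dim U) * ?q ^ m)
        = (?q ^ (dim W - dim U) - 1) * ?q ^ m * FF ?q m (dim W - 1) (dim U)"
        by (simp only: mult.assoc mult.commute[of "FF ?q m (dim W - 1) (dim U)"])
      finally show ?thesis unfolding g_def .
    qed
    also have "\<dots> = FF ?q n (dim W) (dim U)"
      unfolding nm by (rule FF_rec[OF dU km q_pos, symmetric])
    finally show ?thesis .
  qed
qed


end

theorem theorem3:
  fixes scale :: "'a::field \<Rightarrow> 'v::ab_group_add \<Rightarrow> 'v"
    and W U :: "'v set" and n k d :: nat
  assumes "vector_space scale"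
    and "finite (UNIV :: 'a set)"
    and "finite (UNIV :: 'v set)"
    and "vector_space.dim scale (UNIV :: 'v set) = n"
    and "module.subspace scale W" and "vector_space.dim scale W = k"
    and "0 < k" and "k \<le> n"
    and "module.subspace scale U" and "U \<subseteq> W" and "vector_space.dim scale U = d"
  shows "card {T \<in> lin_maps scale W. max_inv_sub scale W T = U}
         = card (UNIV :: 'a set) ^ (d ^ 2)
           * (\<Prod>i\<in>{d+1..k}. card (UNIV :: 'a set) ^ n - card (UNIV :: 'a set) ^ i)"
proof -
  interpret fvs scale
    using assms(1,2,3) by (simp add: fvs_def fvs_axioms_def)
  have lm: "lin_maps scale W = maps W UNIV"
    unfolding lin_maps_def maps_def lin_on_def by simp
  have "{T \<in> lin_maps scale W. max_inv_sub scale W T = U} = {T \<in> maps W UNIV. Inv W T = U}"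
    unfolding lm using max_inv_sub_eq[OF _ assms(5)] unfolding maps_def by auto
  then have "card {T \<in> lin_maps scale W. max_inv_sub scale W T = U}
      = FF (card (UNIV::'a set)) (dim (UNIV::'v set)) (dim W) (dim U)"
    using main[OF refl subspace_UNIV assms(5) subset_UNIV assms(9,10)] by simp
  then show ?thesis using assms(4,6,11) by (simp add: FF_def)
qed

end
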